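(* Every $\epsilon_5$-segment bipath $P$ from $u$ to $v$ in $G$ is an $\epsilon_5$-bipath.
   Context: $G=(V,E)$ is an undirected graph with $n\ge3$ vertices and real edge weights in $[1,W]$; shortest paths in every subgraph are assumed unique, $\pi_{G'}(x,y)$ is the shortest $x$-$y$ path in $G'$, $\circ$ is path concatenation, $|P|$ weighted length, $P[a,b]$ subpath. Let $k=\ln n$, $\epsilon>0$, $\epsilon_1=\epsilon/(2+\epsilon)$, $\epsilon_5=\epsilon_1/(4k-2)$. Let $V=U_1,\dots,U_p$ be subsets of $V$; the level $l(v)$ is the largest $l$ with $v\in U_l$, and $G_i$ is the subgraph induced by vertices of level $\le i$. $\epsilon_5$-segments: for $P=(u=v_0,\dots,v_\ell=v)$ and $1\le i,j<\ell$, $v_i,v_j$ are in the same segment if either both $|P[u,v_i]|,|P[u,v_j]|\le|P|/2$ and $\lfloor\log_{1+\epsilon_5}|P[u,v_i]|\rfloor=\lfloor\log_{1+\epsilon_5}|P[u,v_j]|\rfloor$, or both $|P[v_i,v]|,|P[v_j,v]|<|P|/2$ and $\lfloor\log_{1+\epsilon_5}|P[v_i,v]|\rfloor=\lfloor\log_{1+\epsilon_5}|P[v_j,v]|\rfloor$; classes are contiguous, $u,v$ in no segment. $P$ is an $\epsilon_5$-segment bipath if every segment $P[x,y]$ equals $\pi_{G_i}(x,z)\circ\pi_{G_j}(z,y)$ for some levels $1\le i,j\le p$ and some $z\in P[x,y]$. Let $B=\lceil\log_{1+\epsilon_5}(nW)\rceil$. $P$ is an $\epsilon_5$-bipath if it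 is a concatenation $e_0,P_0,e_1,\dots,P_{2B+1},e_{2B+2}$ with each $e_i$ empty or an edge, each $P_k=P[u_k,v_k]$ either empty or of the form $\pi_{G_i}(u_k,z)\circ\pi_{G_j}(z,v_k)$ for some $z\in P_k$ and levels $1\le i,j\le p$, and $|P[u,v_k]|\le(1+\epsilon_5)^k$ if $k<B+1$, $|P[u_k,v]|\le(1+\epsilon_5)^{2B+1-k}$ if $k\ge B+1$ (for nonempty $P_k$). *)

theory Defs
  imports "HOL-Analysis.Analysis"
begin

definition is_path :: "'a set \<Rightarrow> ('a \<times> 'a) set \<Rightarrow> 'a list \<Rightarrow> bool" where
  "is_path S F P \<longleftrightarrow> P \<noteq> [] \<and> distinct P \<and> set P \<subseteq> S \<and>
     (\<forall>i. Suc i < length P \<longrightarrow> (P ! i, P ! Suc i) \<in> F)"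

definition wlen :: "('a \<Rightarrow> 'a \<Rightarrow> real) \<Rightarrow> 'a list \<Rightarrow> real" where
  "wlen w P = (\<Sum>i<length P - 1. w (P ! i) (P ! Suc i))"

definition is_shortest ::
  "'a set \<Rightarrow> ('a \<times> 'a) set \<Rightarrow> ('a \<Rightarrow> 'a \<Rightarrow> real) \<Rightarrow> 'a \<Rightarrow> 'a \<Rightarrow> 'a list \<Rightarrow> bool" where
  "is_shortest S F w x y P \<longleftrightarrow> is_path S F P \<and> hd P = x \<and> last P = y \<and>
     (\<forall>Q. is_path S F Q \<and> hd Q = x \<and> last Q = y \<longrightarrow> wlen w P \<le> wlen w Q)"

text \<open>The (assumed unique) shortest x-y path in the subgraph (S,F).\<close>
definition spath ::
  "'a set \<Rightarrow> ('a \<times> 'a) set \<Rightarrow> ('a \<Rightarrow> 'a \<Rightarrow> real) \<Rightarrow> 'a \<Rightarrow> 'a \<Rightarrow> 'a list" where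
  "spath S F w x y = (THE P. is_shortest S F w x y P)"

text \<open>Path concatenation (the empty list is the empty path).\<close>
fun pcat :: "'a list \<Rightarrow> 'a list \<Rightarrow> 'a list" where
  "pcat [] q = q"
| "pcat p [] = p"
| "pcat p q = p @ tl q"

definition compat :: "'a list \<Rightarrow> 'a list \<Rightarrow> bool" where
  "compat p q \<longleftrightarrow> p = [] \<or> q = [] \<or> last p = hd q"

definition chain :: "'a list list \<Rightarrow> 'a list" where
  "chain L = foldl pcat [] L"

definition chain_ok :: "'a list list \<Rightarrow> bool" where
  "chain_ok L \<longleftrightarrow> (\<forall>m < length L. compat (chain (take m L)) (L ! m))"

definition subp :: "'a list \<Rightarrow> nat \<Rightarrow> nat \<Rightarrow> 'a list" where
  "subp P a b = take (Suc b - a) (drop a P)"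

definition lev :: "(nat \<Rightarrow> 'a set) \<Rightarrow> nat \<Rightarrow> 'a \<Rightarrow> nat" where
  "lev U p x = Max {l \<in> {1..p}. x \<in> U l}"

definition Gi_V :: "'a set \<Rightarrow> (nat \<Rightarrow> 'a set) \<Rightarrow> nat \<Rightarrow> nat \<Rightarrow> 'a set" where
  "Gi_V V U p i = {x \<in> V. lev U p x \<le> i}"

definition Gi_E :: "'a set \<Rightarrow> ('a \<times> 'a) set \<Rightarrow> (nat \<Rightarrow> 'a set) \<Rightarrow> nat \<Rightarrow> nat \<Rightarrow> ('a \<times> 'a) set" where
  "Gi_E V E U p i = E \<inter> (Gi_V V U p i \<times> Gi_V V U p i)"

definition piG ::
  "'a set \<Rightarrow> ('a \<times> 'a) set \<Rightarrow> ('a \<Rightarrow> 'a \<Rightarrow> real) \<Rightarrow> (nat \<Rightarrow> 'a set) \<Rightarrow> nat \<Rightarrow> nat \<Rightarrow> 'a \<Rightarrow> 'a \<Rightarrow> 'a list" where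
  "piG V E w U p i x y = spath (Gi_V V U p i) (Gi_E V E U p i) w x y"

definition two_sp ::
  "'a set \<Rightarrow> ('a \<times> 'a) set \<Rightarrow> ('a \<Rightarrow> 'a \<Rightarrow> real) \<Rightarrow> (nat \<Rightarrow> 'a set) \<Rightarrow> nat \<Rightarrow> 'a list \<Rightarrow> bool" where
  "two_sp V E w U p Q \<longleftrightarrow> (\<exists>z \<in> set Q. \<exists>i j. 1 \<le> i \<and> i \<le> p \<and> 1 \<le> j \<and> j \<le> p \<and>
      Q = pcat (piG V E w U p i (hd Q) z) (piG V E w U p j z (last Q)))"

text \<open>k = ln n, eps1 = eps/(2+eps), eps5 = eps1/(4k-2).\<close>
definition eps5 :: "nat \<Rightarrow> real \<Rightarrow> real" where
  "eps5 n \<epsilon> = (\<epsilon> / (2 + \<epsilon>)) / (4 * ln (real n) - 2)"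

definition Bnd :: "nat \<Rightarrow> real \<Rightarrow> real \<Rightarrow> nat" where
  "Bnd n W \<epsilon> = nat \<lceil>log (1 + eps5 n \<epsilon>) (real n * W)\<rceil>"

text \<open>For P = (v_0,...,v_l) and 1 <= i,j < l: same eps5-segment.\<close>
definition same_seg :: "('a \<Rightarrow> 'a \<Rightarrow> real) \<Rightarrow> real \<Rightarrow> 'a list \<Rightarrow> nat \<Rightarrow> nat \<Rightarrow> bool" where
  "same_seg w e P i j \<longleftrightarrow>
     (let L = wlen w P; du = (\<lambda>t. wlen w (take (Suc t) P)); dv = (\<lambda>t. wlen w (drop t P)) in
       (du i \<le> L / 2 \<and> du j \<le> L / 2 \<and>
          \<lfloor>log (1 + e) (du i)\<rfloor> = \<lfloor>log (1 + e) (du j)\<rfloor>) \<or>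
       (dv i < L / 2 \<and> dv j < L / 2 \<and>
          \<lfloor>log (1 + e) (dv i)\<rfloor> = \<lfloor>log (1 + e) (dv j)\<rfloor>))"

text \<open>The segment class of index i (for 1 <= i < l); as a segment it is P[v_a, v_b] with
  a, b the least and greatest index of the class (classes are contiguous).\<close>
definition seg_class :: "('a \<Rightarrow> 'a \<Rightarrow> real) \<Rightarrow> real \<Rightarrow> 'a list \<Rightarrow> nat \<Rightarrow> nat set" where
  "seg_class w e P i = {j \<in> {1..<length P - 1}. same_seg w e P i j}"

definition segment_bipath ::
  "'a set \<Rightarrow> ('a \<times> 'a) set \<Rightarrow> ('a \<Rightarrow> 'a \<Rightarrow> real) \<Rightarrow> (nat \<Rightarrow> 'a set) \<Rightarrow> nat \<Rightarrow> real \<Rightarrow> 'a list \<Rightarrow> bool" where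
  "segment_bipath V E w U p e P \<longleftrightarrow>
     (\<forall>i \<in> {1..<length P - 1}.
        (let C = seg_class w e P i; a = Min C; b = Max C in
          \<exists>z \<in> {a..b}. \<exists>li lj. 1 \<le> li \<and> li \<le> p \<and> 1 \<le> lj \<and> lj \<le> p \<and>
            subp P a b = pcat (piG V E w U p li (P ! a) (P ! z)) (piG V E w U p lj (P ! z) (P ! b))))"

text \<open>P = e_0, P_0, e_1, ..., P_{2B+1}, e_{2B+2}; the pieces are stored in a list L of length
  4B+5 with L!(2i) = e_i and L!(2k+1) = P_k, concatenated as paths.
  P[u,v_k] is the concatenation of the pieces up to P_k, P[u_k,v] that of the pieces from P_k on.\<close>
definition bipath ::
  "'a set \<Rightarrow> ('a \<times> 'a) set \<Rightarrow> ('a \<Rightarrow> 'a \<Rightarrow> real) \<Rightarrow> (nat \<Rightarrow> 'a set) \<Rightarrow> nat \<Rightarrow> real \<Rightarrow> nat \<Rightarrow> 'a list \<Rightarrow> bool" where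
  "bipath V E w U p e B P \<longleftrightarrow>
     (\<exists>L :: 'a list list. length L = 4 * B + 5 \<and> chain_ok L \<and> chain L = P \<and>
        (\<forall>i \<le> 2 * B + 2. L ! (2 * i) = [] \<or> (\<exists>a b. L ! (2 * i) = [a, b] \<and> (a, b) \<in> E)) \<and>
        (\<forall>k \<le> 2 * B + 1. L ! (2 * k + 1) \<noteq> [] \<longrightarrow>
            two_sp V E w U p (L ! (2 * k + 1)) \<and>
            (k < B + 1 \<longrightarrow> wlen w (chain (take (2 * k + 2) L)) \<le> (1 + e) ^ k) \<and>
            (k \<ge> B + 1 \<longrightarrow> wlen w (chain (drop (2 * k + 1) L)) \<le> (1 + e) ^ (2 * B + 1 - k))))"

end

theory Submission
  imports Defs
begin


lemma pcat_nil2[simp]: "pcat p [] = p"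
  by (cases p) auto

lemma pcat_cons: "p \<noteq> [] \<Longrightarrow> q \<noteq> [] \<Longrightarrow> pcat p q = p @ tl q"
  by (cases p; cases q) auto

lemma subp_ne: "a \<le> b \<Longrightarrow> a < length P \<Longrightarrow> subp P a b \<noteq> []"
  unfolding subp_def by auto

lemma subp_len: "b < length P \<Longrightarrow> length (subp P a b) = Suc b - a"
  unfolding subp_def by auto

lemma subp_nth: "b < length P \<Longrightarrow> i < Suc b - a \<Longrightarrow> subp P a b ! i = P ! (a + i)"
  unfolding subp_def by auto

lemma subp_hd: "a \<le> b \<Longrightarrow> b < length P \<Longrightarrow> hd (subp P a b) = P ! a"
  unfolding subp_def by (simp add: hd_drop_conv_nth)

lemma subp_last: "a \<le> b \<Longrightarrow> b < length P \<Longrightarrow> last (subp P a b) = P ! b"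
  using subp_nth[of b P "b - a" a] subp_len[of b P a] subp_ne[of a b P]
  by (simp add: last_conv_nth)

lemma subp_set: "a \<le> z \<Longrightarrow> z \<le> b \<Longrightarrow> b < length P \<Longrightarrow> P ! z \<in> set (subp P a b)"
  using subp_nth[of b P "z - a" a] subp_len[of b P a]
  by (metis Suc_diff_le add_diff_inverse_nat diff_less_mono le_imp_less_Suc not_le nth_mem order_less_trans)

lemma subp_0: "b < length P \<Longrightarrow> subp P 0 b = take (Suc b) P"
  unfolding subp_def by simp

lemma subp_end: "subp P a (length P - 1) = drop a P"
  unfolding subp_def by simp

lemma subp_all: "P \<noteq> [] \<Longrightarrow> subp P 0 (length P - 1) = P"
  unfolding subp_def by simp

lemma subp_edge: "Suc a < length P \<Longrightarrow> subp P a (Suc a) = [P ! a, P ! Suc a]"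
  unfolding subp_def
  by (simp add: Cons_nth_drop_Suc[symmetric] numeral_2_eq_2)
  
lemma subp_single: "a < length P \<Longrightarrow> subp P a a = [P ! a]"
  unfolding subp_def by (simp add: Cons_nth_drop_Suc[symmetric])

lemma pcat_subp:
  assumes "a \<le> b" "b \<le> c" "c < length P"
  shows "pcat (subp P a b) (subp P b c) = subp P a c"
proof -
  have "pcat (subp P a b) (subp P b c) = subp P a b @ tl (subp P b c)"
    using assms by (intro pcat_cons subp_ne) auto
  also have "\<dots> = subp P a c"
  proof (rule nth_equalityI)
    show "length (subp P a b @ tl (subp P b c)) = length (subp P a c)"
      using assms by (simp add: subp_len)
  next
    fix i assume "i < length (subp P a b @ tl (subp P b c))"
    then have i: "i < Suc c - a" using assms by (simp add: subp_len)
    show "(subp P a b @ tl (subp P b c)) ! i = subp P a c ! i"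
    proof (cases "i < Suc b - a")
      case True
      then show ?thesis using assms i by (simp add: nth_append subp_len subp_nth)
    next
      case False
      then show ?thesis using assms i
      proof -
        have "Suc (i + a - Suc 0) = a + i" using False assms by arith
        then show ?thesis using False assms i by (simp add: nth_append subp_len subp_nth nth_tl)
      qed
    qed
  qed
  finally show ?thesis .
qed

definition cnt :: "(nat \<Rightarrow> nat) \<Rightarrow> nat \<Rightarrow> nat \<Rightarrow> nat" where
  "cnt \<sigma> l j = card {t. t \<le> l \<and> \<sigma> t < j}"

definition piece :: "'a list \<Rightarrow> (nat \<Rightarrow> nat) \<Rightarrow> nat \<Rightarrow> 'a list" where
  "piece P \<sigma> j = (if cnt \<sigma> (length P - 1) j = cnt \<sigma> (length P - 1) (Suc j) then []
     else subp P (cnt \<sigma> (length P - 1) j - 1) (cnt \<sigma> (length P - 1) (Suc j) - 1))"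

definition mkL :: "'a list \<Rightarrow> (nat \<Rightarrow> nat) \<Rightarrow> nat \<Rightarrow> 'a list list" where
  "mkL P \<sigma> N = map (piece P \<sigma>) [0..<N]"

lemma cnt_char:
  assumes mono: "\<forall>s t. s \<le> t \<longrightarrow> t \<le> l \<longrightarrow> \<sigma> s \<le> \<sigma> t"
  shows "t < cnt \<sigma> l j \<longleftrightarrow> t \<le> l \<and> \<sigma> t < j"
proof (cases "{t. t \<le> l \<and> \<sigma> t < j} = {}")
  case True
  have "cnt \<sigma> l j = 0" unfolding cnt_def True by simp
  moreover have "\<not> (t \<le> l \<and> \<sigma> t < j)" using True by (metis (no_types, lifting) empty_iff mem_Collect_eq)
  ultimately show ?thesis by simp
next
  case False
  define S where "S = {t. t \<le> l \<and> \<sigma> t < j}"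
  have fin: "finite S" unfolding S_def by simp
  define m where "m = Max S"
  have mS: "m \<in> S" using False fin unfolding m_def S_def by (intro Max_in) auto
  have "S = {..m}"
  proof
    show "S \<subseteq> {..m}" using fin unfolding m_def by auto
    show "{..m} \<subseteq> S"
    proof
      fix x assume "x \<in> {..m}"
      then have "x \<le> m" by simp
      moreover have "m \<le> l" "\<sigma> m < j" using mS unfolding S_def by auto
      moreover have "\<sigma> x \<le> \<sigma> m" using mono \<open>x \<le> m\<close> \<open>m \<le> l\<close> by blast
      ultimately show "x \<in> S" unfolding S_def by simp
    qed
  qed
  have c: "cnt \<sigma> l j = Suc m" unfolding cnt_def S_def[symmetric] \<open>S = {..m}\<close> by simp
  have "t \<in> S \<longleftrightarrow> t \<le> l \<and> \<sigma> t < j" unfolding S_def by simp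
  then show ?thesis unfolding c using \<open>S = {..m}\<close> by (simp add: less_Suc_eq_le)
qed

lemma cnt_mono: "j \<le> j' \<Longrightarrow> cnt \<sigma> l j \<le> cnt \<sigma> l j'"
  unfolding cnt_def by (intro card_mono) auto

lemma cnt_0[simp]: "cnt \<sigma> l 0 = 0"
  unfolding cnt_def by simp

lemma cnt_le: "cnt \<sigma> l j \<le> Suc l"
proof -
  have "card {t. t \<le> l \<and> \<sigma> t < j} \<le> card {..l}" by (intro card_mono) auto
  then show ?thesis unfolding cnt_def by simp
qed

lemma cnt_top: "\<forall>t\<le>l. \<sigma> t < N \<Longrightarrow> cnt \<sigma> l N = Suc l"
proof -
  assume "\<forall>t\<le>l. \<sigma> t < N"
  then have "{t. t \<le> l \<and> \<sigma> t < N} = {..l}" by auto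
  then show ?thesis unfolding cnt_def by simp
qed

lemma chain_gen:
  assumes lP: "length P = Suc l" and mr: "m + r \<le> N"
  shows "foldl pcat [] (take r (drop m (mkL P \<sigma> N))) =
    (if cnt \<sigma> l m = cnt \<sigma> l (m + r) then [] else subp P (cnt \<sigma> l m - 1) (cnt \<sigma> l (m + r) - 1))"
  using mr
proof (induction r)
  case 0
  then show ?case by simp
next
  case (Suc r)
  define c0 where "c0 = cnt \<sigma> l m"
  define c1 where "c1 = cnt \<sigma> l (m + r)"
  define c2 where "c2 = cnt \<sigma> l (Suc (m + r))"
  have c01: "c0 \<le> c1" unfolding c0_def c1_def by (rule cnt_mono) simp
  have c12: "c1 \<le> c2" unfolding c2_def c1_def by (rule cnt_mono) simp
  have c2l: "c2 \<le> Suc l" unfolding c2_def by (rule cnt_le)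
  have len: "r < length (drop m (mkL P \<sigma> N))" using Suc.prems unfolding mkL_def by simp
  have nth: "drop m (mkL P \<sigma> N) ! r = piece P \<sigma> (m + r)"
    using Suc.prems unfolding mkL_def by simp
  have pc: "piece P \<sigma> (m + r) = (if c1 = c2 then [] else subp P (c1 - 1) (c2 - 1))"
    unfolding piece_def c1_def c2_def lP by simp
  have IH: "foldl pcat [] (take r (drop m (mkL P \<sigma> N))) = (if c0 = c1 then [] else subp P (c0 - 1) (c1 - 1))"
    using Suc unfolding c0_def c1_def by simp
  have "foldl pcat [] (take (Suc r) (drop m (mkL P \<sigma> N))) =
      pcat (if c0 = c1 then [] else subp P (c0 - 1) (c1 - 1)) (if c1 = c2 then [] else subp P (c1 - 1) (c2 - 1))"
    using len nth pc IH by (simp add: take_Suc_conv_app_nth)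
  also have "\<dots> = (if c0 = c2 then [] else subp P (c0 - 1) (c2 - 1))"
  proof (cases "c1 = c2")
    case True then show ?thesis by simp
  next
    case False
    show ?thesis
    proof (cases "c0 = c1")
      case True then show ?thesis using False by simp
    next
      case F2: False
      have "pcat (subp P (c0 - 1) (c1 - 1)) (subp P (c1 - 1) (c2 - 1)) = subp P (c0 - 1) (c2 - 1)"
        using c01 c12 c2l lP False F2 by (intro pcat_subp) auto
      then show ?thesis using False F2 c01 c12 by simp
    qed
  qed
  finally show ?case unfolding c0_def c2_def by simp
qed

lemma mkL_len: "length (mkL P \<sigma> N) = N"
  unfolding mkL_def by simp

lemma mkL_nth: "j < N \<Longrightarrow> mkL P \<sigma> N ! j = piece P \<sigma> j"
  unfolding mkL_def by simp

lemma chain_take: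
  assumes "length P = Suc l" "m \<le> N"
  shows "chain (take m (mkL P \<sigma> N)) = (if cnt \<sigma> l m = 0 then [] else take (cnt \<sigma> l m) P)"
proof -
  have "chain (take m (mkL P \<sigma> N)) = foldl pcat [] (take m (drop 0 (mkL P \<sigma> N)))"
    unfolding chain_def by simp
  also have "\<dots> = (if cnt \<sigma> l 0 = cnt \<sigma> l (0 + m) then [] else subp P (cnt \<sigma> l 0 - 1) (cnt \<sigma> l (0 + m) - 1))"
    using assms by (intro chain_gen) auto
  finally show ?thesis using cnt_le[of \<sigma> l m] assms(1) by (auto simp: subp_0)
qed

lemma chain_drop:
  assumes "length P = Suc l" "m \<le> N" "cnt \<sigma> l m \<noteq> cnt \<sigma> l N" "cnt \<sigma> l N = Suc l"
  shows "chain (drop m (mkL P \<sigma> N)) = drop (cnt \<sigma> l m - 1) P"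
proof -
  have "chain (drop m (mkL P \<sigma> N)) = foldl pcat [] (take (N - m) (drop m (mkL P \<sigma> N)))"
    unfolding chain_def by (simp add: mkL_len)
  also have "\<dots> = (if cnt \<sigma> l m = cnt \<sigma> l (m + (N - m)) then [] else subp P (cnt \<sigma> l m - 1) (cnt \<sigma> l (m + (N - m)) - 1))"
    using assms by (intro chain_gen) auto
  moreover have "subp P (cnt \<sigma> l m - 1) l = drop (cnt \<sigma> l m - 1) P"
    using subp_end[of P "cnt \<sigma> l m - 1"] assms(1) by simp
  moreover have "cnt \<sigma> l (m + (N - m)) = Suc l" using assms by simp
  ultimately show ?thesis using assms(3,4) by simp
qed

lemma chain_ok_mkL:
  assumes "length P = Suc l"
  shows "chain_ok (mkL P \<sigma> N)"
  unfolding chain_ok_def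
proof (intro allI impI)
  fix m assume m: "m < length (mkL P \<sigma> N)"
  then have mN: "m < N" by (simp add: mkL_len)
  have ch: "chain (take m (mkL P \<sigma> N)) = (if cnt \<sigma> l m = 0 then [] else take (cnt \<sigma> l m) P)"
    using assms mN by (intro chain_take) auto
  have pc: "mkL P \<sigma> N ! m = piece P \<sigma> m" using mN by (simp add: mkL_nth)
  have c1: "cnt \<sigma> l m \<le> cnt \<sigma> l (Suc m)" by (rule cnt_mono) simp
  have c2: "cnt \<sigma> l (Suc m) \<le> Suc l" by (rule cnt_le)
  show "compat (chain (take m (mkL P \<sigma> N))) (mkL P \<sigma> N ! m)"
    unfolding compat_def ch pc
  proof (cases "cnt \<sigma> l m = 0 \<or> cnt \<sigma> l m = cnt \<sigma> l (Suc m)")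
    case True
    then show "(if cnt \<sigma> l m = 0 then [] else take (cnt \<sigma> l m) P) = [] \<or> piece P \<sigma> m = [] \<or>
      last (if cnt \<sigma> l m = 0 then [] else take (cnt \<sigma> l m) P) = hd (piece P \<sigma> m)"
      unfolding piece_def assms by auto
  next
    case False
    then have "piece P \<sigma> m = subp P (cnt \<sigma> l m - 1) (cnt \<sigma> l (Suc m) - 1)"
      unfolding piece_def assms by simp
    then have "hd (piece P \<sigma> m) = P ! (cnt \<sigma> l m - 1)"
      using False c1 c2 assms by (simp add: subp_hd)
    moreover have "last (take (cnt \<sigma> l m) P) = P ! (cnt \<sigma> l m - 1)"
    proof -
      have ne: "take (cnt \<sigma> l m) P \<noteq> []" using False assms by (cases P) auto
      have "cnt \<sigma> l m \<le> length P" using c1 c2 assms by simp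
      then have "length (take (cnt \<sigma> l m) P) = cnt \<sigma> l m" by simp
      then show ?thesis using ne False by (simp add: last_conv_nth)
    qed
    ultimately show "(if cnt \<sigma> l m = 0 then [] else take (cnt \<sigma> l m) P) = [] \<or> piece P \<sigma> m = [] \<or>
      last (if cnt \<sigma> l m = 0 then [] else take (cnt \<sigma> l m) P) = hd (piece P \<sigma> m)"
      using False by simp
  qed
qed

lemma chain_all:
  assumes "length P = Suc l" "\<forall>t\<le>l. \<sigma> t < N"
  shows "chain (mkL P \<sigma> N) = P"
  using chain_take[OF assms(1), of N N \<sigma>] cnt_top[OF assms(2)] assms(1)
  by (simp add: mkL_len)



lemma sum_split_nat: "(\<Sum>i<t + r. f i) = (\<Sum>i<t. f i) + (\<Sum>i<r. f (t + i)) " for f :: "nat \<Rightarrow> real"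
  by (induction r) auto

locale bctx =
  fixes V :: "'a set" and E :: "('a \<times> 'a) set" and w :: "'a \<Rightarrow> 'a \<Rightarrow> real"
    and U :: "nat \<Rightarrow> 'a set" and p :: nat and e :: real and B :: nat and P :: "'a list"
  assumes e_pos: "0 < e"
    and P_ne: "P \<noteq> []"
    and P_E: "\<forall>i. Suc i < length P \<longrightarrow> (P ! i, P ! Suc i) \<in> E"
    and wpos: "\<forall>i. Suc i < length P \<longrightarrow> 1 \<le> w (P ! i) (P ! Suc i)"
    and Lw_lt: "wlen w P < (1 + e) ^ B"
    and single: "length P = 1 \<Longrightarrow> two_sp V E w U p [P ! 0]"
    and segb: "segment_bipath V E w U p e P"
begin

definition "l = length P - 1"
definition "Lw = wlen w P"
definition "du t = wlen w (take (Suc t) P)"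
definition "dv t = wlen w (drop t P)"
definition "fl x = nat \<lfloor>log (1 + e) x\<rfloor>"
definition "kk t = (if du t \<le> Lw / 2 then fl (du t) + 1 else 2 * B - fl (dv t))"

lemma lP: "length P = Suc l"
  using P_ne unfolding l_def by (cases P) auto

lemma du_sum: "t < length P \<Longrightarrow> du t = (\<Sum>i<t. w (P ! i) (P ! Suc i))"
proof -
  assume t: "t < length P"
  then have len: "length (take (Suc t) P) = Suc t" by simp
  show ?thesis unfolding du_def wlen_def len
    by (rule sum.cong) auto
qed

lemma Lw_sum: "Lw = (\<Sum>i<l. w (P ! i) (P ! Suc i))"
  unfolding Lw_def wlen_def l_def by simp

lemma dv_sum: "t < length P \<Longrightarrow> dv t = (\<Sum>i<l - t. w (P ! (t + i)) (P ! Suc (t + i)))"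
  unfolding dv_def wlen_def l_def by (simp add: add.commute)

lemma du_dv: "t < length P \<Longrightarrow> du t + dv t = Lw"
proof -
  assume t: "t < length P"
  then have "l = t + (l - t)" using lP by simp
  then have "Lw = (\<Sum>i<t + (l - t). w (P ! i) (P ! Suc i))" using Lw_sum by simp
  also have "\<dots> = du t + dv t" unfolding sum_split_nat using t by (simp add: du_sum dv_sum)
  finally show ?thesis by simp
qed

lemma du_step: "Suc t < length P \<Longrightarrow> du (Suc t) = du t + w (P ! t) (P ! Suc t)"
  by (simp add: du_sum)

lemma du_step1: "Suc t < length P \<Longrightarrow> du t + 1 \<le> du (Suc t)"
  using du_step wpos by simp

lemma du_mono: "s \<le> t \<Longrightarrow> t < length P \<Longrightarrow> du s \<le> du t"
proof (induction t)
  case 0 then show ?case by simp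
next
  case (Suc t)
  show ?case
  proof (cases "s = Suc t")
    case True then show ?thesis by simp
  next
    case False
    then have "du s \<le> du t" using Suc by simp
    also have "\<dots> \<le> du (Suc t)" using du_step1[of t] Suc.prems by simp
    finally show ?thesis .
  qed
qed

lemma du_ge: "t < length P \<Longrightarrow> real t \<le> du t"
proof (induction t)
  case 0 then show ?case by (simp add: du_sum)
next
  case (Suc t)
  then show ?case using du_step1[of t] by simp
qed

lemma du_0: "du 0 = 0" using P_ne by (simp add: du_sum)

lemma du_Lw: "du l = Lw"
  unfolding du_def Lw_def using lP by simp

lemma du_le: "t < length P \<Longrightarrow> du t \<le> Lw"
  using du_mono[of t l] du_Lw lP by simp

lemma dv_ge1: "t < l \<Longrightarrow> 1 \<le> dv t"
proof -
  assume t: "t < l"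
  have "du t + 1 \<le> du (Suc t)" using du_step1 t lP by simp
  also have "\<dots> \<le> du l" using du_mono[of "Suc t" l] t lP by simp
  finally show ?thesis using du_dv[of t] du_Lw t lP by simp
qed

lemma dv_le: "t < length P \<Longrightarrow> dv t \<le> Lw"
  using du_dv[of t] du_ge[of t] by simp

lemma b_gt1: "1 < 1 + e" using e_pos by simp

lemma fl_props:
  assumes "1 \<le> x"
  shows "real (fl x) = \<lfloor>log (1 + e) x\<rfloor>" and "x < (1 + e) ^ (fl x + 1)"
proof -
  have lg: "0 \<le> log (1 + e) x" using assms b_gt1 by simp
  then show fl: "real (fl x) = \<lfloor>log (1 + e) x\<rfloor>" unfolding fl_def by simp
  have "log (1 + e) x < real (fl x + 1)" using fl by linarith
  then have "(1 + e) powr log (1 + e) x < (1 + e) powr real (fl x + 1)"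
    using b_gt1 by (intro powr_less_mono) auto
  moreover have "(1 + e) powr real (fl x + 1) = (1 + e) ^ (fl x + 1)"
    using b_gt1 by (intro powr_realpow) simp
  moreover have "(1 + e) powr log (1 + e) x = x" using assms b_gt1 by simp
  ultimately show "x < (1 + e) ^ (fl x + 1)" by simp
qed

lemma fl_int: "1 \<le> x \<Longrightarrow> int (fl x) = \<lfloor>log (1 + e) x\<rfloor>"
  unfolding fl_def using b_gt1 by simp

lemma fl_lt:
  assumes "1 \<le> x" "x < (1 + e) ^ B"
  shows "fl x < B"
proof -
  have "log (1 + e) x < log (1 + e) ((1 + e) ^ B)"
    using assms b_gt1 by (intro log_less) auto
  also have "\<dots> = real B" using b_gt1 by (simp add: log_nat_power)
  finally have "log (1 + e) x < real B" .
  then have "\<lfloor>log (1 + e) x\<rfloor> < int B" by linarith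
  then show ?thesis using fl_props(1)[OF assms(1)] by linarith
qed

lemma fl_mono:
  assumes "1 \<le> x" "x \<le> y"
  shows "fl x \<le> fl y"
proof -
  have "log (1 + e) x \<le> log (1 + e) y" using assms b_gt1 by simp
  then have "\<lfloor>log (1 + e) x\<rfloor> \<le> \<lfloor>log (1 + e) y\<rfloor>" by (rule floor_mono)
  then show ?thesis unfolding fl_def by simp
qed

lemma du_lt: "t < length P \<Longrightarrow> du t < (1 + e) ^ B"
  using du_le Lw_lt unfolding Lw_def by fastforce

lemma dv_lt: "t < length P \<Longrightarrow> dv t < (1 + e) ^ B"
  using dv_le Lw_lt unfolding Lw_def by fastforce

lemma du_ge1: "1 \<le> t \<Longrightarrow> t < length P \<Longrightarrow> 1 \<le> du t"
  using du_ge[of t] by simp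

lemma kk_u: "1 \<le> t \<Longrightarrow> t < l \<Longrightarrow> du t \<le> Lw / 2 \<Longrightarrow> 1 \<le> kk t \<and> kk t \<le> B"
  using fl_lt[of "du t"] du_ge1[of t] du_lt[of t] lP unfolding kk_def by simp

lemma kk_v: "1 \<le> t \<Longrightarrow> t < l \<Longrightarrow> \<not> du t \<le> Lw / 2 \<Longrightarrow> B + 1 \<le> kk t \<and> kk t \<le> 2 * B"
  using fl_lt[of "dv t"] dv_ge1[of t] dv_lt[of t] lP unfolding kk_def by simp

lemma kk_bnd: "1 \<le> t \<Longrightarrow> t < l \<Longrightarrow> 1 \<le> kk t \<and> kk t \<le> 2 * B"
  using kk_u[of t] kk_v[of t] by (cases "du t \<le> Lw / 2") auto

lemma kk_step: "1 \<le> t \<Longrightarrow> Suc t < l \<Longrightarrow> kk t \<le> kk (Suc t)"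
proof -
  assume t: "1 \<le> t" "Suc t < l"
  have d: "du t < du (Suc t)" using du_step1[of t] t lP by simp
  have dd: "du t + dv t = Lw" "du (Suc t) + dv (Suc t) = Lw" using du_dv[of t] du_dv[of "Suc t"] t lP by auto
  show ?thesis
  proof (cases "du (Suc t) \<le> Lw / 2")
    case True
    then have "du t \<le> Lw / 2" using d by simp
    then show ?thesis using True fl_mono[of "du t" "du (Suc t)"] d du_ge1[of t] t lP unfolding kk_def by simp
  next
    case False
    show ?thesis
    proof (cases "du t \<le> Lw / 2")
      case True
      then show ?thesis using kk_u[of t] kk_v[of "Suc t"] False t by simp
    next
      case F2: False
      have "fl (dv (Suc t)) \<le> fl (dv t)"
        using fl_mono[of "dv (Suc t)" "dv t"] dv_ge1[of "Suc t"] d dd t by simp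
      then show ?thesis using False F2 unfolding kk_def by simp
    qed
  qed
qed

lemma kk_mono: "1 \<le> s \<Longrightarrow> s \<le> t \<Longrightarrow> t < l \<Longrightarrow> kk s \<le> kk t"
proof (induction t)
  case 0 then show ?case by simp
next
  case (Suc t)
  show ?case
  proof (cases "s = Suc t")
    case True then show ?thesis by simp
  next
    case False
    then have "kk s \<le> kk t" using Suc by simp
    also have "\<dots> \<le> kk (Suc t)" using kk_step[of t] Suc.prems False by simp
    finally show ?thesis .
  qed
qed

definition "sg t = (if t = 0 then (if l = 0 then 1 else if l = 1 then 4 * B + 4 else 2 * kk 1)
   else if l \<le> t then 4 * B + 4
   else if 2 \<le> t \<and> kk (t - 1) = kk t then 2 * kk t + 1 else 2 * kk t)"

lemma sg_int: "1 \<le> t \<Longrightarrow> t < l \<Longrightarrow> sg t = (if 2 \<le> t \<and> kk (t - 1) = kk t then 2 * kk t + 1 else 2 * kk t)"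
  unfolding sg_def by simp

lemma sg_int_bnd: "1 \<le> t \<Longrightarrow> t < l \<Longrightarrow> 2 * kk t \<le> sg t \<and> sg t \<le> 2 * kk t + 1"
  using sg_int by simp

lemma sg_step: "t < l \<Longrightarrow> sg t \<le> sg (Suc t)"
proof -
  assume t: "t < l"
  show ?thesis
  proof (cases "t = 0")
    case True
    then show ?thesis using t unfolding sg_def by auto
  next
    case False
    then have t1: "1 \<le> t" by simp
    show ?thesis
    proof (cases "Suc t = l")
      case True
      then show ?thesis using sg_int_bnd[of t] kk_bnd[of t] t1 t unfolding sg_def[of "Suc t"] by simp
    next
      case False
      then have st: "Suc t < l" using t by simp
      have k: "kk t \<le> kk (Suc t)" using kk_step t1 st by simp
      show ?thesis
      proof (cases "kk t = kk (Suc t)")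
        case True
        then show ?thesis using sg_int[of t] sg_int[of "Suc t"] t1 st by simp
      next
        case False
        then show ?thesis using sg_int_bnd[of t] sg_int_bnd[of "Suc t"] k t1 st by simp
      qed
    qed
  qed
qed

lemma sg_mono: "s \<le> t \<Longrightarrow> t \<le> l \<Longrightarrow> sg s \<le> sg t"
proof (induction t)
  case 0 then show ?case by simp
next
  case (Suc t)
  show ?case
  proof (cases "s = Suc t")
    case True then show ?thesis by simp
  next
    case False
    then have "sg s \<le> sg t" using Suc by simp
    also have "\<dots> \<le> sg (Suc t)" using sg_step[of t] Suc.prems by simp
    finally show ?thesis .
  qed
qed

lemma sg_mono': "\<forall>s t. s \<le> t \<longrightarrow> t \<le> l \<longrightarrow> sg s \<le> sg t"
  using sg_mono by blast

lemma sg_lt: "t \<le> l \<Longrightarrow> sg t < 4 * B + 5"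
proof -
  assume t: "t \<le> l"
  show ?thesis
  proof (cases "1 \<le> t \<and> t < l")
    case True
    then show ?thesis using sg_int_bnd[of t] kk_bnd[of t] by simp
  next
    case False
    then show ?thesis using kk_bnd[of 1] t unfolding sg_def by auto
  qed
qed

lemma sg_even_step: "1 \<le> t \<Longrightarrow> t < l \<Longrightarrow> even (sg t) \<Longrightarrow> sg t < sg (Suc t)"
proof -
  assume t: "1 \<le> t" "t < l" "even (sg t)"
  then have st: "sg t = 2 * kk t" using sg_int[of t] by (auto split: if_splits)
  show ?thesis
  proof (cases "Suc t = l")
    case True
    then show ?thesis using st kk_bnd[of t] t unfolding sg_def[of "Suc t"] by simp
  next
    case False
    then have st2: "Suc t < l" using t by simp
    have k: "kk t \<le> kk (Suc t)" using kk_step t st2 by simp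
    show ?thesis
    proof (cases "kk t = kk (Suc t)")
      case True
      then show ?thesis using st sg_int[of "Suc t"] t st2 by simp
    next
      case False
      then show ?thesis using st sg_int_bnd[of "Suc t"] k t st2 by simp
    qed
  qed
qed

lemma same_seg_unf: "same_seg w e P i j \<longleftrightarrow>
   (du i \<le> Lw / 2 \<and> du j \<le> Lw / 2 \<and> \<lfloor>log (1 + e) (du i)\<rfloor> = \<lfloor>log (1 + e) (du j)\<rfloor>) \<or>
   (dv i < Lw / 2 \<and> dv j < Lw / 2 \<and> \<lfloor>log (1 + e) (dv i)\<rfloor> = \<lfloor>log (1 + e) (dv j)\<rfloor>)"
  unfolding same_seg_def Let_def du_def dv_def Lw_def by simp

lemma same_seg_iff:
  assumes "1 \<le> i" "i < l" "1 \<le> j" "j < l"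
  shows "same_seg w e P i j \<longleftrightarrow> kk i = kk j"
proof -
  have iP: "i < length P" and jP: "j < length P" using assms lP by auto
  have dvi: "dv i < Lw / 2 \<longleftrightarrow> \<not> du i \<le> Lw / 2" using du_dv[OF iP] by linarith
  have dvj: "dv j < Lw / 2 \<longleftrightarrow> \<not> du j \<le> Lw / 2" using du_dv[OF jP] by linarith
  have f1: "real (fl (du i)) = \<lfloor>log (1 + e) (du i)\<rfloor>" "real (fl (du j)) = \<lfloor>log (1 + e) (du j)\<rfloor>"
    using fl_props(1)[OF du_ge1[OF assms(1) iP]] fl_props(1)[OF du_ge1[OF assms(3) jP]] by simp_all
  have f2: "real (fl (dv i)) = \<lfloor>log (1 + e) (dv i)\<rfloor>" "real (fl (dv j)) = \<lfloor>log (1 + e) (dv j)\<rfloor>"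
    using fl_props(1)[OF dv_ge1[OF assms(2)]] fl_props(1)[OF dv_ge1[OF assms(4)]] by simp_all
  have b: "fl (dv i) < B" "fl (dv j) < B"
    using fl_lt[OF dv_ge1[OF assms(2)] dv_lt[OF iP]] fl_lt[OF dv_ge1[OF assms(4)] dv_lt[OF jP]] by simp_all
  show ?thesis
  proof (cases "du i \<le> Lw / 2")
    case T1: True
    show ?thesis
    proof (cases "du j \<le> Lw / 2")
      case True
      have e1: "\<lfloor>log (1 + e) (du i)\<rfloor> = \<lfloor>log (1 + e) (du j)\<rfloor> \<longleftrightarrow> fl (du i) = fl (du j)"
        unfolding fl_int[OF du_ge1[OF assms(1) iP], symmetric] fl_int[OF du_ge1[OF assms(3) jP], symmetric] by simp
      have "same_seg w e P i j \<longleftrightarrow> \<lfloor>log (1 + e) (du i)\<rfloor> = \<lfloor>log (1 + e) (du j)\<rfloor>"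
        unfolding same_seg_unf using T1 True dvi dvj by simp
      moreover have "kk i = kk j \<longleftrightarrow> fl (du i) = fl (du j)" unfolding kk_def using T1 True by simp
      ultimately show ?thesis using e1 by simp
    next
      case False
      have "\<not> same_seg w e P i j" unfolding same_seg_unf using T1 False dvi dvj by simp
      moreover have "kk i \<noteq> kk j" using kk_u[of i] kk_v[of j] T1 False assms by simp
      ultimately show ?thesis by simp
    qed
  next
    case F1: False
    show ?thesis
    proof (cases "du j \<le> Lw / 2")
      case True
      have "\<not> same_seg w e P i j" unfolding same_seg_unf using F1 True dvi dvj by simp
      moreover have "kk i \<noteq> kk j" using kk_u[of j] kk_v[of i] F1 True assms by simp
      ultimately show ?thesis by simp
    next
      case False
      have e2: "\<lfloor>log (1 + e) (dv i)\<rfloor> = \<lfloor>log (1 + e) (dv j)\<rfloor> \<longleftrightarrow> fl (dv i) = fl (dv j)"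
        unfolding fl_int[OF dv_ge1[OF assms(2)], symmetric] fl_int[OF dv_ge1[OF assms(4)], symmetric] by simp
      have e3: "2 * B - fl (dv i) = 2 * B - fl (dv j) \<longleftrightarrow> fl (dv i) = fl (dv j)" using b by linarith
      have "same_seg w e P i j \<longleftrightarrow> \<lfloor>log (1 + e) (dv i)\<rfloor> = \<lfloor>log (1 + e) (dv j)\<rfloor>"
        unfolding same_seg_unf using F1 False dvi dvj by simp
      moreover have "kk i = kk j \<longleftrightarrow> 2 * B - fl (dv i) = 2 * B - fl (dv j)" unfolding kk_def using F1 False by simp
      ultimately show ?thesis using e2 e3 by simp
    qed
  qed
qed

lemma seg_class_eq: "1 \<le> t \<Longrightarrow> t < l \<Longrightarrow> seg_class w e P t = {j. 1 \<le> j \<and> j < l \<and> kk j = kk t}"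
proof -
  assume t: "1 \<le> t" "t < l"
  have "{1..<length P - 1} = {1..<l}" using lP by simp
  then show ?thesis unfolding seg_class_def using same_seg_iff[of t] t by force
qed

definition "c j = cnt sg l j"

lemma c_char: "t < c j \<longleftrightarrow> t \<le> l \<and> sg t < j"
  unfolding c_def using cnt_char[OF sg_mono'] .

lemma c_le: "c j \<le> Suc l" unfolding c_def by (rule cnt_le)

lemma c_mono: "j \<le> j' \<Longrightarrow> c j \<le> c j'" unfolding c_def by (rule cnt_mono)

lemma c_top: "c (4 * B + 5) = Suc l"
  unfolding c_def using sg_lt by (intro cnt_top) auto

lemma piece_eq: "piece P sg j = (if c j = c (Suc j) then [] else subp P (c j - 1) (c (Suc j) - 1))"
  unfolding piece_def c_def l_def by simp

lemma slot_x: "c j \<noteq> c (Suc j) \<Longrightarrow> c j \<le> l \<and> sg (c j) = j"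
proof -
  assume ne: "c j \<noteq> c (Suc j)"
  have "c j \<le> c (Suc j)" by (rule c_mono) simp
  then have "c j < c (Suc j)" using ne by simp
  then have 1: "c j \<le> l \<and> sg (c j) < Suc j" using c_char by blast
  have "\<not> c j < c j" by simp
  then have "\<not> sg (c j) < j" using c_char 1 by blast
  then show ?thesis using 1 by simp
qed

lemma sg_l: "1 \<le> l \<Longrightarrow> sg l = 4 * B + 4"
  unfolding sg_def by simp

lemma even_slot: "piece P sg (2 * i) = [] \<or> (\<exists>a b. piece P sg (2 * i) = [a, b] \<and> (a, b) \<in> E)"
proof (cases "c (2 * i) = c (Suc (2 * i))")
  case True
  then show ?thesis unfolding piece_eq by simp
next
  case False
  define x where "x = c (2 * i)"
  have sx: "x \<le> l" "sg x = 2 * i" using slot_x[OF False] unfolding x_def by auto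
  have "c (Suc (2 * i)) - 1 = Suc (x - 1) \<and> Suc (x - 1) < length P"
  proof (cases "x = 0")
    case True
    have l0: "l \<noteq> 0"
    proof
      assume "l = 0"
      then have "sg 0 = 1" unfolding sg_def by simp
      then have "(1::nat) = 2 * i" using sx True by simp
      then show False by presburger
    qed
    have sg1: "sg 1 = sg 0" using l0 unfolding sg_def by simp
    have a1: "1 < c (Suc (2 * i))" using c_char[of 1 "Suc (2 * i)"] sg1 True sx l0 by simp
    have a2: "\<not> 2 < c (Suc (2 * i))"
    proof (cases "l = 1")
      case True
      then show ?thesis using c_le[of "Suc (2 * i)"] by simp
    next
      case False
      have ev: "even (sg 1)" using sg1 sx \<open>x = 0\<close> by simp
      have "1 < l" using False l0 by simp
      then have "sg 1 < sg (Suc 1)" using sg_even_step[of 1] ev by simp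
      then have "sg 1 < sg 2" by (simp add: numeral_2_eq_2)
      then show ?thesis using c_char[of 2 "Suc (2 * i)"] sg1 True sx by (simp add: numeral_2_eq_2)
    qed
    show ?thesis using a1 a2 True lP l0 by simp
  next
    case False
    have a1: "x < c (Suc (2 * i))" using c_char[of x "Suc (2 * i)"] sx by simp
    have a2: "\<not> Suc x < c (Suc (2 * i))"
    proof
      assume "Suc x < c (Suc (2 * i))"
      then have h: "Suc x \<le> l" "sg (Suc x) < Suc (2 * i)" using c_char by blast+
      then have "sg x < sg (Suc x)" using sg_even_step[of x] False sx by simp
      then show False using h sx by simp
    qed
    have "c (Suc (2 * i)) \<le> Suc l" by (rule c_le)
    then show ?thesis using a1 a2 False lP by simp
  qed
  moreover have "c (2 * i) - 1 = x - 1" unfolding x_def by simp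
  ultimately have "piece P sg (2 * i) = subp P (x - 1) (Suc (x - 1))"
    using False unfolding piece_eq by simp
  also have "\<dots> = [P ! (x - 1), P ! Suc (x - 1)]"
    using \<open>c (Suc (2 * i)) - 1 = Suc (x - 1) \<and> Suc (x - 1) < length P\<close> by (intro subp_edge) simp
  finally show ?thesis using P_E \<open>c (Suc (2 * i)) - 1 = Suc (x - 1) \<and> Suc (x - 1) < length P\<close> by blast
qed

lemma two_sp_subp:
  assumes "a \<le> z" "z \<le> b" "b < length P" "1 \<le> li" "li \<le> p" "1 \<le> lj" "lj \<le> p"
    and eq: "subp P a b = pcat (piG V E w U p li (P ! a) (P ! z)) (piG V E w U p lj (P ! z) (P ! b))"
  shows "two_sp V E w U p (subp P a b)"
proof -
  have "hd (subp P a b) = P ! a" "last (subp P a b) = P ! b"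
    using assms(1-3) by (auto intro: subp_hd subp_last)
  moreover have "P ! z \<in> set (subp P a b)" using assms by (intro subp_set) auto
  ultimately show ?thesis unfolding two_sp_def using assms by metis
qed

lemma odd_slot:
  assumes k: "k \<le> 2 * B + 1" and ne: "piece P sg (2 * k + 1) \<noteq> []"
  shows "two_sp V E w U p (piece P sg (2 * k + 1)) \<and>
    (k < B + 1 \<longrightarrow> wlen w (chain (take (2 * k + 2) (mkL P sg (4 * B + 5)))) \<le> (1 + e) ^ k) \<and>
    (B + 1 \<le> k \<longrightarrow> wlen w (chain (drop (2 * k + 1) (mkL P sg (4 * B + 5)))) \<le> (1 + e) ^ (2 * B + 1 - k))"
proof -
  have s2: "Suc (2 * k + 1) = 2 * k + 2" by simp
  have cne: "c (2 * k + 1) \<noteq> c (2 * k + 2)" using ne unfolding piece_eq s2 by auto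
  define x where "x = c (2 * k + 1)"
  have sx: "x \<le> l" "sg x = 2 * k + 1" using slot_x[of "2 * k + 1"] cne unfolding x_def s2 by auto
  have cle: "c (2 * k + 2) \<le> Suc l" by (rule c_le)
  have cm: "c (2 * k + 1) \<le> c (2 * k + 2)" by (rule c_mono) simp
  show ?thesis
  proof (cases "x = 0")
    case True
    have l0: "l = 0"
    proof (rule ccontr)
      assume "l \<noteq> 0"
      then have "even (sg 0)" unfolding sg_def by simp
      then show False using sx True by simp
    qed
    have k0: "k = 0" using sx True l0 unfolding sg_def by simp
    have c1: "c 1 = 0" using x_def True k0 by simp
    have c2: "c 2 = 1" using cle cm cne l0 k0 c1 by (simp add: numeral_2_eq_2)
    have pc: "piece P sg (2 * k + 1) = subp P 0 0" using cne k0 c2 c1 unfolding piece_eq by (simp add: numeral_2_eq_2)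
    also have "\<dots> = [P ! 0]" using P_ne by (intro subp_single) simp
    finally have pc': "piece P sg (2 * k + 1) = [P ! 0]" .
    have ts: "two_sp V E w U p (piece P sg (2 * k + 1))" unfolding pc' using single lP l0 by simp
    have "chain (take 2 (mkL P sg (4 * B + 5))) = take 1 P"
      using chain_take[OF lP, of 2 "4 * B + 5" sg] c2 unfolding c_def by simp
    moreover have "wlen w (take 1 P) = 0" unfolding wlen_def by simp
    ultimately show ?thesis using ts k0 by (simp add: numeral_2_eq_2)
  next
    case False
    have xl: "x < l"
    proof (rule ccontr)
      assume "\<not> x < l"
      then have "x = l" using sx by simp
      then have "sg x = 4 * B + 4" using False sg_l by simp
      then have "2 * k + 1 = 4 * B + 4" using sx by simp
      then show False by presburger
    qed
    have x1: "1 \<le> x" using False by simp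
    have xint: "2 \<le> x \<and> kk (x - 1) = kk x"
    proof (rule ccontr)
      assume "\<not> (2 \<le> x \<and> kk (x - 1) = kk x)"
      then have "sg x = 2 * kk x" using sg_int[OF x1 xl] by simp
      then have "2 * k + 1 = 2 * kk x" using sx by simp
      then show False by presburger
    qed
    then have kx: "k = kk x" using sg_int[OF x1 xl] sx by simp
    define C where "C = seg_class w e P x"
    have Ceq: "C = {j. 1 \<le> j \<and> j < l \<and> kk j = k}" unfolding C_def kx using seg_class_eq[OF x1 xl] .
    have finC: "finite C" unfolding Ceq by (rule finite_subset[of _ "{..<l}"]) auto
    have xC: "x \<in> C" "x - 1 \<in> C" unfolding Ceq using xint x1 xl kx by auto
    define a where "a = Min C"
    define b where "b = Max C"
    have aC: "a \<in> C" unfolding a_def using finC xC by (intro Min_in) auto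
    have bC: "b \<in> C" unfolding b_def using finC xC by (intro Max_in) auto
    have ax: "a \<le> x - 1" unfolding a_def using finC xC by simp
    have xb: "x \<le> b" unfolding b_def using finC xC by simp
    have a1: "1 \<le> a" "a < l" "kk a = k" using aC unfolding Ceq by auto
    have b1: "1 \<le> b" "b < l" "kk b = k" using bC unfolding Ceq by auto
    have kB: "k \<le> 2 * B" using kk_bnd[OF x1 xl] kx by simp
    have sga: "sg a = 2 * k"
    proof -
      have "\<not> (2 \<le> a \<and> kk (a - 1) = kk a)"
      proof
        assume h: "2 \<le> a \<and> kk (a - 1) = kk a"
        then have "a - 1 \<in> C" unfolding Ceq using a1 by auto
        then have "a \<le> a - 1" unfolding a_def using finC by simp
        moreover have "2 \<le> a" using h by blast
        ultimately show False by linarith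
      qed
      then show ?thesis using sg_int[OF a1(1) a1(2)] a1 by simp
    qed
    have sga1: "sg (Suc a) = 2 * k + 1"
    proof -
      have "kk a \<le> kk (Suc a)" "kk (Suc a) \<le> kk x"
        using kk_mono[of a "Suc a"] kk_mono[of "Suc a" x] a1 ax xl x1 by auto
      then have "kk (Suc a) = k" using a1 kx by simp
      then show ?thesis using sg_int[of "Suc a"] a1 ax xl x1 by simp
    qed
    have ca: "c (2 * k + 1) = Suc a"
    proof -
      have "a < c (2 * k + 1)" using c_char[of a] sga a1 by simp
      moreover have "\<not> Suc a < c (2 * k + 1)" using c_char[of "Suc a"] sga1 by simp
      ultimately show ?thesis by simp
    qed
    have sgb: "sg b = 2 * k + 1"
    proof -
      have "kk a \<le> kk (b - 1)" "kk (b - 1) \<le> kk b"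
        using kk_mono[of a "b - 1"] kk_mono[of "b - 1" b] a1 b1 ax xb x1 by auto
      then have "kk (b - 1) = kk b" using a1 b1 by simp
      then show ?thesis using sg_int[of b] b1 xb xint by simp
    qed
    have cb: "c (2 * k + 2) = Suc b"
    proof -
      have "b < c (2 * k + 2)" using c_char[of b] sgb b1 by simp
      moreover have "\<not> Suc b < c (2 * k + 2)"
      proof
        assume "Suc b < c (2 * k + 2)"
        then have h: "Suc b \<le> l" "sg (Suc b) < 2 * k + 2" using c_char by blast+
        show False
        proof (cases "Suc b = l")
          case True
          then show False using h sg_l[of] kB by simp
        next
          case False
          then have sbl: "Suc b < l" using h by simp
          have "kk b \<le> kk (Suc b)" using kk_step[of b] b1 sbl by simp
          moreover have "kk (Suc b) \<noteq> k"
          proof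
            assume "kk (Suc b) = k"
            then have "Suc b \<in> C" unfolding Ceq using sbl by simp
            then have "Suc b \<le> b" unfolding b_def using finC by simp
            then show False by simp
          qed
          ultimately have "k + 1 \<le> kk (Suc b)" using b1 by simp
          then show False using h sg_int_bnd[of "Suc b"] sbl by simp
        qed
      qed
      ultimately show ?thesis by simp
    qed
    have pc: "piece P sg (2 * k + 1) = subp P a b"
      using cne ca cb unfolding piece_eq s2 by simp
    have seg: "\<exists>z\<in>{a..b}. \<exists>li lj. 1 \<le> li \<and> li \<le> p \<and> 1 \<le> lj \<and> lj \<le> p \<and>
            subp P a b = pcat (piG V E w U p li (P ! a) (P ! z)) (piG V E w U p lj (P ! z) (P ! b))"
    proof -
      have "x \<in> {1..<length P - 1}" using x1 xl unfolding l_def by simp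
      then show ?thesis using segb unfolding segment_bipath_def a_def b_def C_def Let_def by blast
    qed
    then obtain z li lj where z: "z \<in> {a..b}" "1 \<le> li" "li \<le> p" "1 \<le> lj" "lj \<le> p"
      "subp P a b = pcat (piG V E w U p li (P ! a) (P ! z)) (piG V E w U p lj (P ! z) (P ! b))" by blast
    have ts: "two_sp V E w U p (piece P sg (2 * k + 1))"
      unfolding pc using z b1 lP by (intro two_sp_subp[of a z b li lj]) auto
    have bnd1: "k < B + 1 \<longrightarrow> wlen w (chain (take (2 * k + 2) (mkL P sg (4 * B + 5)))) \<le> (1 + e) ^ k"
    proof
      assume kB1: "k < B + 1"
      have ub: "du b \<le> Lw / 2" using kk_v[OF b1(1) b1(2)] b1 kB1 by (cases "du b \<le> Lw / 2") auto
      then have "kk b = fl (du b) + 1" unfolding kk_def by simp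
      then have fk: "fl (du b) + 1 = k" using b1 by simp
      have "chain (take (2 * k + 2) (mkL P sg (4 * B + 5))) = take (Suc b) P"
        using chain_take[OF lP, of "2 * k + 2" "4 * B + 5" sg] cb k unfolding c_def by simp
      then have "wlen w (chain (take (2 * k + 2) (mkL P sg (4 * B + 5)))) = du b" unfolding du_def by simp
      also have "\<dots> < (1 + e) ^ (fl (du b) + 1)" using fl_props(2)[OF du_ge1[of b]] b1 lP by simp
      finally have "wlen w (chain (take (2 * k + 2) (mkL P sg (4 * B + 5)))) < (1 + e) ^ (fl (du b) + 1)" .
      then show "wlen w (chain (take (2 * k + 2) (mkL P sg (4 * B + 5)))) \<le> (1 + e) ^ k" unfolding fk by simp
    qed
    have bnd2: "B + 1 \<le> k \<longrightarrow> wlen w (chain (drop (2 * k + 1) (mkL P sg (4 * B + 5)))) \<le> (1 + e) ^ (2 * B + 1 - k)"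
    proof
      assume kB1: "B + 1 \<le> k"
      have ua: "\<not> du a \<le> Lw / 2" using kk_u[OF a1(1) a1(2)] a1 kB1 by (cases "du a \<le> Lw / 2") auto
      then have "kk a = 2 * B - fl (dv a)" unfolding kk_def by simp
      moreover have "fl (dv a) < B" using fl_lt[OF dv_ge1[OF a1(2)] dv_lt[of a]] a1 lP by simp
      ultimately have fk: "fl (dv a) + 1 = 2 * B + 1 - k" using a1 by simp
      have "chain (drop (2 * k + 1) (mkL P sg (4 * B + 5))) = drop a P"
        using chain_drop[OF lP, of "2 * k + 1" "4 * B + 5" sg] ca c_top a1 k unfolding c_def by simp
      then have "wlen w (chain (drop (2 * k + 1) (mkL P sg (4 * B + 5)))) = dv a" unfolding dv_def by simp
      also have "\<dots> < (1 + e) ^ (fl (dv a) + 1)" using fl_props(2)[OF dv_ge1[OF a1(2)]] by simp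
      finally have "wlen w (chain (drop (2 * k + 1) (mkL P sg (4 * B + 5)))) < (1 + e) ^ (fl (dv a) + 1)" .
      then show "wlen w (chain (drop (2 * k + 1) (mkL P sg (4 * B + 5)))) \<le> (1 + e) ^ (2 * B + 1 - k)"
        unfolding fk by simp
    qed
    show ?thesis using ts bnd1 bnd2 by simp
  qed
qed

lemma main: "bipath V E w U p e B P"
  unfolding bipath_def
proof (intro exI[of _ "mkL P sg (4 * B + 5)"] conjI allI impI)
  show "length (mkL P sg (4 * B + 5)) = 4 * B + 5" by (rule mkL_len)
  show "chain_ok (mkL P sg (4 * B + 5))" by (rule chain_ok_mkL[OF lP])
  show "chain (mkL P sg (4 * B + 5)) = P" using sg_lt by (intro chain_all[OF lP]) auto
next
  fix i assume "i \<le> 2 * B + 2"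
  then have "mkL P sg (4 * B + 5) ! (2 * i) = piece P sg (2 * i)" by (intro mkL_nth) simp
  then show "mkL P sg (4 * B + 5) ! (2 * i) = [] \<or>
         (\<exists>a b. mkL P sg (4 * B + 5) ! (2 * i) = [a, b] \<and> (a, b) \<in> E)" using even_slot by simp
next
  fix k assume k: "k \<le> 2 * B + 1" and ne: "mkL P sg (4 * B + 5) ! (2 * k + 1) \<noteq> []"
  have eq: "mkL P sg (4 * B + 5) ! (2 * k + 1) = piece P sg (2 * k + 1)" using k by (intro mkL_nth) simp
  have o: "two_sp V E w U p (piece P sg (2 * k + 1)) \<and>
    (k < B + 1 \<longrightarrow> wlen w (chain (take (2 * k + 2) (mkL P sg (4 * B + 5)))) \<le> (1 + e) ^ k) \<and>
    (B + 1 \<le> k \<longrightarrow> wlen w (chain (drop (2 * k + 1) (mkL P sg (4 * B + 5)))) \<le> (1 + e) ^ (2 * B + 1 - k))"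
    using odd_slot[OF k] ne eq by simp
  then show "two_sp V E w U p (mkL P sg (4 * B + 5) ! (2 * k + 1))" using eq by simp
  show "k < B + 1 \<Longrightarrow> wlen w (chain (take (2 * k + 2) (mkL P sg (4 * B + 5)))) \<le> (1 + e) ^ k" using o by simp
  show "B + 1 \<le> k \<Longrightarrow> wlen w (chain (drop (2 * k + 1) (mkL P sg (4 * B + 5)))) \<le> (1 + e) ^ (2 * B + 1 - k)" using o by simp
qed

end


lemma wlen_nonneg:
  assumes "\<forall>i. Suc i < length Q \<longrightarrow> 0 \<le> w (Q ! i) (Q ! Suc i)"
  shows "0 \<le> wlen w Q"
  unfolding wlen_def using assms by (intro sum_nonneg) auto

theorem lemma4p11:
  fixes V :: "'a set" and E :: "('a \<times> 'a) set" and w :: "'a \<Rightarrow> 'a \<Rightarrow> real"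
    and W \<epsilon> :: real and U :: "nat \<Rightarrow> 'a set" and p :: nat and P :: "'a list" and u v :: 'a
  assumes "finite V" and "card V \<ge> 3"
    and "E \<subseteq> V \<times> V" and "sym E" and "\<forall>x. (x, x) \<notin> E"
    and "\<forall>(x, y) \<in> E. w x y = w y x \<and> 1 \<le> w x y \<and> w x y \<le> W"
    and "\<forall>S F x y Q1 Q2. S \<subseteq> V \<longrightarrow> F \<subseteq> E \<inter> (S \<times> S) \<longrightarrow> sym F \<longrightarrow>
           is_shortest S F w x y Q1 \<longrightarrow> is_shortest S F w x y Q2 \<longrightarrow> Q1 = Q2"
    and "\<epsilon> > 0"
    and "p \<ge> 1" and "U 1 = V" and "\<forall>l \<in> {1..p}. U l \<subseteq> V"
    and "is_path V E P" and "hd P = u" and "last P = v"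
    and "segment_bipath V E w U p (eps5 (card V) \<epsilon>) P"
  shows "bipath V E w U p (eps5 (card V) \<epsilon>) (Bnd (card V) W \<epsilon>) P"
proof -
  note A = assms
  define n where "n = card V"
  define e where "e = eps5 n \<epsilon>"
  define B where "B = Bnd n W \<epsilon>"
  have n3: "3 \<le> real n" using A(2) unfolding n_def by simp
  have ln3: "1 \<le> ln (real n)"
  proof -
    have "exp 1 \<le> real n" using exp_le n3 by linarith
    then have "ln (exp 1) \<le> ln (real n)" using n3 by (subst ln_le_cancel_iff) auto
    then show ?thesis by simp
  qed
  have e_pos: "0 < e"
  proof -
    have h1: "0 < \<epsilon> / (2 + \<epsilon>)" using A(8) by simp
    have h2: "0 < 4 * ln (real n) - 2" using ln3 by simp
    show ?thesis unfolding e_def eps5_def by (rule divide_pos_pos[OF h1 h2])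
  qed
  have Pp: "P \<noteq> []" "distinct P" "set P \<subseteq> V" "\<forall>i. Suc i < length P \<longrightarrow> (P ! i, P ! Suc i) \<in> E"
    using A(12) unfolding is_path_def by auto
  have wE: "1 \<le> w x y \<and> w x y \<le> W" if "(x, y) \<in> E" for x y
    using A(6) that by auto
  have wpos: "\<forall>i. Suc i < length P \<longrightarrow> 1 \<le> w (P ! i) (P ! Suc i)"
  proof (intro allI impI)
    fix i assume "Suc i < length P"
    then have "(P ! i, P ! Suc i) \<in> E" using Pp(4) by simp
    then show "1 \<le> w (P ! i) (P ! Suc i)" using wE by simp
  qed
  have wW: "\<forall>i. Suc i < length P \<longrightarrow> w (P ! i) (P ! Suc i) \<le> W"
  proof (intro allI impI)
    fix i assume "Suc i < length P"
    then have "(P ! i, P ! Suc i) \<in> E" using Pp(4) by simp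
    then show "w (P ! i) (P ! Suc i) \<le> W" using wE by simp
  qed
  have lenP: "length P \<le> n"
  proof -
    have "length P = card (set P)" using Pp(2) by (simp add: distinct_card)
    also have "\<dots> \<le> card V" using Pp(3) A(1) by (intro card_mono)
    finally show ?thesis unfolding n_def .
  qed
  have Lw_lt: "wlen w P < (1 + e) ^ B"
  proof (cases "length P = 1")
    case True
    then have "wlen w P = 0" unfolding wlen_def by simp
    then show ?thesis using e_pos by simp
  next
    case False
    have "length P \<noteq> 0" using Pp(1) by simp
    then have l2: "2 \<le> length P" using False by linarith
    then have "Suc 0 < length P" by simp
    then have "1 \<le> w (P ! 0) (P ! Suc 0)" "w (P ! 0) (P ! Suc 0) \<le> W" using wpos wW by blast+
    then have W1: "1 \<le> W" by linarith
    have "wlen w P \<le> (\<Sum>i<length P - 1. W)" unfolding wlen_def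
      using wW by (intro sum_mono) auto
    also have "\<dots> = real (length P - 1) * W" by simp
    also have "\<dots> \<le> real (n - 1) * W" using lenP W1 by (intro mult_right_mono) auto
    also have "\<dots> < real n * W" using W1 n3 by (simp add: of_nat_diff algebra_simps)
    finally have lt: "wlen w P < real n * W" .
    have pos: "0 < real n * W" using W1 n3 by simp
    have "real n * W = (1 + e) powr log (1 + e) (real n * W)" using pos e_pos by simp
    also have "\<dots> \<le> (1 + e) powr real B"
    proof (intro powr_mono)
      show "log (1 + e) (real n * W) \<le> real B" unfolding B_def Bnd_def e_def by linarith
    qed (use e_pos in simp)
    also have "\<dots> = (1 + e) ^ B" using e_pos by (simp add: powr_realpow)
    finally show ?thesis using lt by simp
  qed
  have single: "length P = 1 \<Longrightarrow> two_sp V E w U p [P ! 0]"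
  proof -
    assume "length P = 1"
    define x where "x = P ! 0"
    have xV: "x \<in> V" using Pp(1,3) unfolding x_def by (cases P) auto
    define S where "S = Gi_V V U p p"
    define F where "F = Gi_E V E U p p"
    have levp: "lev U p x \<le> p"
    proof -
      have fin: "finite {l \<in> {1..p}. x \<in> U l}" by simp
      have "1 \<in> {l \<in> {1..p}. x \<in> U l}" using A(9,10) xV by simp
      then have "Max {l \<in> {1..p}. x \<in> U l} \<in> {l \<in> {1..p}. x \<in> U l}" using fin by (intro Max_in) auto
      then show ?thesis unfolding lev_def by simp
    qed
    have xS: "x \<in> S" unfolding S_def Gi_V_def using xV levp by simp
    have SV: "S \<subseteq> V" unfolding S_def Gi_V_def by auto
    have FE: "F \<subseteq> E \<inter> (S \<times> S)" unfolding F_def Gi_E_def S_def by auto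
    have symF: "sym F" unfolding F_def Gi_E_def using A(4) unfolding sym_def by auto
    have sh: "is_shortest S F w x x [x]"
      unfolding is_shortest_def
    proof (intro conjI allI impI)
      show "is_path S F [x]" unfolding is_path_def using xS by simp
      fix Q assume "is_path S F Q \<and> hd Q = x \<and> last Q = x"
      then have "\<forall>i. Suc i < length Q \<longrightarrow> (Q ! i, Q ! Suc i) \<in> E" using FE unfolding is_path_def by auto
      then have "\<forall>i. Suc i < length Q \<longrightarrow> 0 \<le> w (Q ! i) (Q ! Suc i)" using wE by force
      then have "0 \<le> wlen w Q" by (rule wlen_nonneg)
      then show "wlen w [x] \<le> wlen w Q" unfolding wlen_def by simp
    qed simp_all
    have "spath S F w x x = [x]" unfolding spath_def
    proof (rule the_equality)
      show "is_shortest S F w x x [x]" by (rule sh)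
      fix Q assume "is_shortest S F w x x Q"
      then show "Q = [x]" using A(7)[rule_format, OF SV FE symF] sh by blast
    qed
    then have pg: "piG V E w U p p x x = [x]" unfolding piG_def S_def F_def by simp
    show "two_sp V E w U p [P ! 0]" unfolding two_sp_def x_def[symmetric]
      using pg A(9) by (intro bexI[of _ x]) (auto intro!: exI[of _ p])
  qed
  interpret bctx V E w U p e B P
  proof
    show "0 < e" by (rule e_pos)
    show "P \<noteq> []" by (rule Pp(1))
    show "\<forall>i. Suc i < length P \<longrightarrow> (P ! i, P ! Suc i) \<in> E" by (rule Pp(4))
    show "\<forall>i. Suc i < length P \<longrightarrow> 1 \<le> w (P ! i) (P ! Suc i)" by (rule wpos)
    show "wlen w P < (1 + e) ^ B" by (rule Lw_lt)
    show "length P = 1 \<Longrightarrow> two_sp V E w U p [P ! 0]" by (rule single)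
    show "segment_bipath V E w U p e P" using A(15) unfolding e_def n_def .
  qed
  have "bipath V E w U p e B P" by (rule main)
  then show ?thesis unfolding e_def B_def n_def .
qed

end
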